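(* Let $R$ be a commutative ring with identity and let $\mathcal{N}(R)$ be the set of all nilpotent elements of $R$. Then $\mathcal{N}(R)=\bigcup_{a\in R} a\Gamma_a(R)=E_R(0)$.
   Context: For $a\in R$, $a\Gamma_{a}(R)=\{ar \mid r\in R,\ a^{k}r=0 \text{ for some } k\in\mathbb{Z}^{+}\}$. $E_R(0)=\{ar \mid a,r\in R,\ a^{k}r=0 \text{ for some } k\in\mathbb{Z}^{+}\}$ (the envelope of the zero ideal in the $R$-module $R$). *)

theory Defs
  imports Main
begin

definition nilpotents :: "'a::comm_ring_1 set" where
  "nilpotents = {x. \<exists>n::nat. n > 0 \<and> x ^ n = 0}"

definition aGamma :: "'a::comm_ring_1 \<Rightarrow> 'a set" where
  "aGamma a = {a * r | r. \<exists>k::nat. k > 0 \<and> a ^ k * r = 0}"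

definition envelope_zero :: "'a::comm_ring_1 set" where
  "envelope_zero = {a * r | a r. \<exists>k::nat. k > 0 \<and> a ^ k * r = 0}"

end

theory Submission
  imports Defs
begin


lemma env_nil2:
  fixes a r :: "'a::comm_ring_1"
  assumes h: "a ^ k * r = 0" and k: "k > 0"
  shows "(a * r) ^ k = 0"
proof -
  obtain j where j: "k = Suc j" using k by (cases k) auto
  have "(a * r) ^ k = (a ^ k * r) * r ^ j" by (simp add: j power_mult_distrib algebra_simps)
  thus ?thesis using h by simp
qed

theorem mainTheorem10:
  shows "(nilpotents :: 'a::comm_ring_1 set) = (\<Union>a. aGamma a)
       \<and> (\<Union>a. aGamma a) = (envelope_zero :: 'a set)"
proof
  show "(nilpotents :: 'a set) = (\<Union>a. aGamma a)"
  proof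
    show "(nilpotents :: 'a set) \<subseteq> (\<Union>a. aGamma a)"
    proof
      fix x :: 'a assume "x \<in> nilpotents"
      then obtain n where "n > 0" "x ^ n = 0" by (auto simp: nilpotents_def)
      hence "x \<in> aGamma x" unfolding aGamma_def by (intro CollectI exI[of _ 1]) auto
      thus "x \<in> (\<Union>a. aGamma a)" by blast
    qed
    show "(\<Union>a. aGamma a) \<subseteq> (nilpotents :: 'a set)"
      unfolding aGamma_def nilpotents_def using env_nil2 by blast
  qed
  show "(\<Union>a. aGamma a) = (envelope_zero :: 'a set)"
    unfolding aGamma_def envelope_zero_def by blast
qed

end
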